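(* Let $\nu>2$ and let $F_\nu$ be the CDF of the Student's $t$-distribution with $\nu$ degrees of freedom, location $0$ and scale $1$. For every real $m\in(0,\nu)$ and every $t>0$, $$\frac{1}{(1-F_\nu(t))(t^2+\nu)^{\frac{\nu-1}{2}}}\le\frac{\sqrt{t^2+\nu-m}}{\kappa_m},\qquad \kappa_m=\frac{\Gamma\left(\frac{\nu+1}{2}\right)(\nu-m)\,m^{\nu/2-1}}{2\sqrt{\pi}\,\Gamma\left(\frac{\nu}{2}\right)}.$$ *)

theory Defs
  imports "HOL-Probability.Probability"
begin

definition student_t_density :: "real \<Rightarrow> real \<Rightarrow> real" where
  "student_t_density \<nu> x =
     Gamma ((\<nu> + 1) / 2) / (sqrt (\<nu> * pi) * Gamma (\<nu> / 2))
     * (1 + x\<^sup>2 / \<nu>) powr (- (\<nu> + 1) / 2)"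

definition student_t_CDF :: "real \<Rightarrow> real \<Rightarrow> real" where
  "student_t_CDF \<nu> t = (LBINT x:{..t}. student_t_density \<nu> x)"

end

theory Submission
  imports Defs "HOL-Real_Asymp.Real_Asymp"
begin


definition phi :: "real \<Rightarrow> real \<Rightarrow> real" where
  "phi \<nu> w = sqrt \<nu> * (w - 1/2) / sqrt (w*(1-w))"
definition phi' :: "real \<Rightarrow> real \<Rightarrow> real" where
  "phi' \<nu> w = sqrt \<nu> / (4 * (w*(1-w)) * sqrt (w*(1-w)))"

lemma phi_deriv:
  assumes "0 < w" "w < 1"
  shows "(phi \<nu> has_real_derivative phi' \<nu> w) (at w)"
proof -
  have P: "w*(1-w) > 0" using assms by simp
  define S where "S = sqrt (w*(1-w))"
  have S: "S > 0" "S * S = w*(1-w)" using P by (auto simp: S_def)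
  have d: "((\<lambda>w. sqrt (w*(1-w))) has_real_derivative (1 - 2*w) / (2 * S)) (at w)"
    unfolding S_def using P
    by (auto intro!: derivative_eq_intros simp: field_simps)
  have "((\<lambda>w. sqrt \<nu> * (w - 1/2) / sqrt (w*(1-w))) has_real_derivative 
      (sqrt \<nu> * 1 * S - (1 - 2*w) / (2 * S) * (sqrt \<nu> * (w - 1/2))) / (S * S)) (at w)"
    using DERIV_divide[OF DERIV_cmult[OF DERIV_diff[OF DERIV_ident DERIV_const]] d, of "sqrt \<nu>" "1/2"] S
    using assms by (simp add: S_def ac_simps)
  moreover have "(sqrt \<nu> * 1 * S - (1 - 2*w) / (2 * S) * (sqrt \<nu> * (w - 1/2))) / (S * S) = phi' \<nu> w"
  proof -
    have key: "2*(S*S) - (1-2*w)*(w-1/2) = 1/2" using S(2) by (simp add: algebra_simps)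
    have "(sqrt \<nu> * 1 * S - (1 - 2*w) / (2 * S) * (sqrt \<nu> * (w - 1/2))) / (S * S)
        = sqrt \<nu> * (2*(S*S) - (1-2*w)*(w-1/2)) / (2 * (S*S*S))"
      using S(1) by (simp add: field_simps)
    also have "\<dots> = sqrt \<nu> / (4 * (S*S) * S)" unfolding key by (simp add: field_simps)
    finally show ?thesis unfolding phi'_def S_def[symmetric] S(2) .
  qed
  ultimately show ?thesis unfolding phi_def[abs_def] by simp
qed

definition rho :: "real \<Rightarrow> real \<Rightarrow> real" where
  "rho \<nu> x = (1 + x\<^sup>2 / \<nu>) powr (- (\<nu> + 1) / 2)"

lemma rho_phi:
  assumes "0 < w" "w < 1" "\<nu> > 0"
  shows "rho \<nu> (phi \<nu> w) * phi' \<nu> w = sqrt \<nu> * 2 powr (\<nu> - 1) * (w powr (\<nu>/2-1) * (1-w) powr (\<nu>/2-1))"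
proof -
  define P where "P = w*(1-w)"
  have P: "P > 0" using assms by (simp add: P_def)
  have sP: "sqrt P * sqrt P = P" using P by simp
  have "1 + (phi \<nu> w)\<^sup>2 / \<nu> = 1 + (w-1/2)^2 / P"
    unfolding phi_def P_def[symmetric] using assms P
    by (simp add: power_divide real_sqrt_pow2 power_mult_distrib)
  also have "\<dots> = 1 + (1/4 - P) / P" by (simp add: P_def power2_eq_square algebra_simps)
  also have "\<dots> = 1 / (4*P)" using P by (simp add: field_simps)
  finally have e1: "1 + (phi \<nu> w)\<^sup>2 / \<nu> = 1 / (4*P)" .
  have "rho \<nu> (phi \<nu> w) = (4*P) powr ((\<nu>+1)/2)"
    unfolding rho_def e1 using P
    by (simp add: powr_divide powr_minus_divide divide_simps flip: powr_add)
  also have "\<dots> = 4 powr ((\<nu>+1)/2) * (P powr (\<nu>/2-1) * P powr (3/2))"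
    using P by (simp add: powr_mult add_divide_distrib add.commute flip: powr_add)
  also have "P powr (3/2) = P * sqrt P"
    using P by (simp add: powr_add[of P 1 "1/2", simplified] powr_half_sqrt)
  also have "(4::real) powr ((\<nu>+1)/2) = 4 * 2 powr (\<nu> - 1)"
  proof -
    have "(4::real) powr ((\<nu>+1)/2) = (2 powr 2) powr ((\<nu>+1)/2)" by simp
    also have "\<dots> = 2 powr (\<nu>+1)" by (simp add: powr_powr)
    also have "\<dots> = 2 powr 2 * 2 powr (\<nu> - 1)" by (simp only: powr_add[symmetric]) (simp add: add.commute)
    finally show ?thesis by simp
  qed
  finally have "rho \<nu> (phi \<nu> w) = 4 * 2 powr (\<nu> - 1) * (P powr (\<nu>/2-1) * (P * sqrt P))" .
  moreover have "phi' \<nu> w = sqrt \<nu> / (4 * P * sqrt P)" unfolding phi'_def P_def ..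
  moreover have "P powr (\<nu>/2-1) = w powr (\<nu>/2-1) * (1-w) powr (\<nu>/2-1)"
    unfolding P_def using assms by (simp add: powr_mult)
  ultimately show ?thesis using P by (simp add: field_simps)
qed

lemma beta_piece:
  fixes q :: real assumes q: "q > 0"
  shows "set_integrable lborel (einterval 0 1) (\<lambda>w. w powr q * (1-w) powr q)"
    and "(LBINT w=0..1. w powr q * (1-w) powr q) = Beta (q+1) (q+1)"
proof -
  have c: "continuous_on {0..1} (\<lambda>w::real. w powr q * (1-w) powr q)"
    using q by (intro continuous_intros continuous_on_powr') auto
  have i: "set_integrable lborel {0..1} (\<lambda>w::real. w powr q * (1-w) powr q)"
    by (rule borel_integrable_atLeastAtMost'[OF c])
  show "set_integrable lborel (einterval 0 1) (\<lambda>w. w powr q * (1-w) powr q)"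
    by (rule set_integrable_subset[OF i]) (auto simp: zero_ereal_def one_ereal_def)
  have "(LBINT w=ereal 0..ereal 1. w powr q * (1-w) powr q) = integral {0..1} (\<lambda>w::real. w powr q * (1-w) powr q)"
    by (rule interval_integral_eq_integral[OF _ i]) simp
  also have "\<dots> = Beta (q+1) (q+1)"
    using has_integral_Beta_real[of "q+1" "q+1"] q by (auto intro: integral_unique)
  finally show "(LBINT w=0..1. w powr q * (1-w) powr q) = Beta (q+1) (q+1)"
    by (simp add: zero_ereal_def one_ereal_def)
qed


lemma phi_lim0:
  assumes "\<nu> > 0" shows "filterlim (phi \<nu>) at_bot (at_right 0)"
  unfolding phi_def using assms by real_asymp

lemma phi_lim1:
  assumes "\<nu> > 0" shows "filterlim (phi \<nu>) at_top (at_left 1)"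
  unfolding phi_def using assms by real_asymp

lemma rho_total:
  assumes nu: "\<nu> > 2"
  shows "set_integrable lborel (einterval (-\<infinity>) \<infinity>) (rho \<nu>)"
    and "(LBINT x=-\<infinity>..\<infinity>. rho \<nu> x) = sqrt \<nu> * 2 powr (\<nu> - 1) * Beta (\<nu>/2) (\<nu>/2)"
proof -
  let ?c = "sqrt \<nu> * 2 powr (\<nu> - 1)"
  have q: "\<nu>/2 - 1 > 0" using nu by simp
  have eq: "rho \<nu> (phi \<nu> x) * phi' \<nu> x = ?c * (x powr (\<nu>/2-1) * (1-x) powr (\<nu>/2-1))"
    if "x \<in> einterval 0 1" for x
    using that nu rho_phi[of x \<nu>] by (simp add: einterval_def zero_ereal_def one_ereal_def)
  have int: "set_integrable lborel (einterval 0 1) (\<lambda>x. rho \<nu> (phi \<nu> x) * phi' \<nu> x)"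
    by (subst set_integrable_cong[OF refl refl eq]) (auto intro: beta_piece(1)[OF q])
  have 1: "\<And>x. 0 < ereal x \<Longrightarrow> ereal x < 1 \<Longrightarrow> DERIV (phi \<nu>) x :> phi' \<nu> x"
    by (rule phi_deriv) (auto simp: zero_ereal_def one_ereal_def)
  have 2: "\<And>x. 0 < ereal x \<Longrightarrow> ereal x < 1 \<Longrightarrow> isCont (rho \<nu>) (phi \<nu> x)"
  proof -
    fix x
    have "1 + (phi \<nu> x)\<^sup>2 / \<nu> > 0" using nu by (intro add_pos_nonneg) auto
    then show "isCont (rho \<nu>) (phi \<nu> x)" unfolding rho_def using nu by (auto intro!: continuous_intros)
  qed
  have 3: "\<And>x. 0 < ereal x \<Longrightarrow> ereal x < 1 \<Longrightarrow> isCont (phi' \<nu>) x"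
    unfolding phi'_def[abs_def] by (auto intro!: continuous_intros simp: zero_ereal_def one_ereal_def)
  have 4: "\<And>x. 0 \<le> ereal x \<Longrightarrow> ereal x \<le> 1 \<Longrightarrow> 0 \<le> phi' \<nu> x"
    unfolding phi'_def using nu by (auto simp: zero_ereal_def one_ereal_def intro!: divide_nonneg_pos divide_nonneg_nonneg mult_nonneg_nonneg)
  have A: "((ereal \<circ> phi \<nu> \<circ> real_of_ereal) \<longlongrightarrow> -\<infinity>) (at_right 0)"
    using phi_lim0[of \<nu>] nu by (simp add: zero_ereal_def ereal_tendsto_simps)
  have B: "((ereal \<circ> phi \<nu> \<circ> real_of_ereal) \<longlongrightarrow> \<infinity>) (at_left 1)"
    using phi_lim1[of \<nu>] nu by (simp add: one_ereal_def ereal_tendsto_simps)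
  have 5: "\<And>x. 0 < ereal x \<Longrightarrow> ereal x < 1 \<Longrightarrow> 0 \<le> rho \<nu> (phi \<nu> x)"
    unfolding rho_def by simp
  note S = interval_integral_substitution_nonneg[of 0 1 "phi \<nu>" "phi' \<nu>" "rho \<nu>" "-\<infinity>" "\<infinity>",
     OF _ 1 2 3 5 4 A B int]
  show "set_integrable lborel (einterval (-\<infinity>) \<infinity>) (rho \<nu>)" using S(1) by simp
  have "(LBINT x=-\<infinity>..\<infinity>. rho \<nu> x) = (LBINT x=0..1. rho \<nu> (phi \<nu> x) * phi' \<nu> x)" using S(2) by simp
  also have "\<dots> = (LBINT x=0..1. ?c * (x powr (\<nu>/2-1) * (1-x) powr (\<nu>/2-1)))"
    by (rule interval_integral_cong) (simp add: eq)
  also have "\<dots> = ?c * Beta (\<nu>/2) (\<nu>/2)"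
    using beta_piece(2)[OF q] by simp
  finally show "(LBINT x=-\<infinity>..\<infinity>. rho \<nu> x) = ?c * Beta (\<nu>/2) (\<nu>/2)" .
qed



lemma Gamma_dup_real:
  fixes z :: real assumes "z > 0"
  shows "Gamma z * Gamma (z + 1/2) = 2 powr (1 - 2*z) * sqrt pi * Gamma (2*z)"
proof -
  have n1: "complex_of_real z \<notin> \<int>\<^sub>\<le>\<^sub>0" using assms
    by (metis of_real_in_nonpos_Ints_iff nonpos_Ints_nonpos not_le)
  have e: "complex_of_real z + 1/2 = complex_of_real (z + 1/2)" by simp
  have "z + 1/2 \<notin> \<int>\<^sub>\<le>\<^sub>0" using assms nonpos_Ints_nonpos[of "z+1/2"] by linarith
  then have n2: "complex_of_real z + 1/2 \<notin> \<int>\<^sub>\<le>\<^sub>0" unfolding e of_real_in_nonpos_Ints_iff .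
  have "complex_of_real (Gamma z * Gamma (z + 1/2)) = complex_of_real (2 powr (1 - 2*z) * sqrt pi * Gamma (2*z))"
  proof -
    have g1: "Gamma (complex_of_real z) = of_real (Gamma z)" by (rule Gamma_complex_of_real)
    have g2: "Gamma (complex_of_real z + 1/2) = of_real (Gamma (z + 1/2))" unfolding e by (rule Gamma_complex_of_real)
    have g3: "Gamma (2 * complex_of_real z) = of_real (Gamma (2*z))"
      using Gamma_complex_of_real[of "2*z"] by simp
    have g4: "exp ((1 - 2*complex_of_real z) * complex_of_real (ln 2)) = of_real (2 powr (1 - 2*z))"
      by (simp add: powr_def exp_of_real[symmetric] mult.commute)
    show ?thesis using Gamma_legendre_duplication[OF n1 n2] unfolding g1 g2 g3 g4 by simp
  qed
  then show ?thesis by (simp only: of_real_eq_iff)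
qed

lemma young_part:
  fixes \<nu> m :: real assumes "\<nu> > 2" "0 < m" "m < \<nu>"
  shows "m powr (\<nu>/2-1) * (\<nu> * (\<nu> - m)) \<le> 2 * \<nu> powr (\<nu>/2)"
proof -
  define a where "a = m/\<nu>"
  define b where "b = (\<nu>-m)/2"
  have a: "a > 0" and b: "b > 0" using assms by (auto simp: a_def b_def)
  have Y: "a powr ((\<nu>-2)/\<nu>) * b powr (2/\<nu>) \<le> (\<nu>-2)/\<nu> * a + 2/\<nu> * b"
    using assms a b by (intro Youngs_inequality_0) (auto simp: field_simps)
  also have "\<dots> \<le> 1" using assms unfolding a_def b_def by (simp add: field_simps)
  finally have Y1: "a powr ((\<nu>-2)/\<nu>) * b powr (2/\<nu>) \<le> 1" .
  have "(a powr ((\<nu>-2)/\<nu>) * b powr (2/\<nu>)) powr (\<nu>/2) \<le> 1 powr (\<nu>/2)"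
    using Y1 assms by (intro powr_mono2) auto
  moreover have "(a powr ((\<nu>-2)/\<nu>) * b powr (2/\<nu>)) powr (\<nu>/2) = a powr (\<nu>/2-1) * b"
  proof -
    have e1: "(\<nu>-2)/\<nu> * (\<nu>/2) = \<nu>/2 - 1" "2/\<nu> * (\<nu>/2) = 1" using assms by (auto simp: field_simps)
    have "(a powr ((\<nu>-2)/\<nu>) * b powr (2/\<nu>)) powr (\<nu>/2) = (a powr ((\<nu>-2)/\<nu>)) powr (\<nu>/2) * (b powr (2/\<nu>)) powr (\<nu>/2)"
      by (rule powr_mult; simp)
    also have "\<dots> = a powr ((\<nu>-2)/\<nu> * (\<nu>/2)) * b powr (2/\<nu> * (\<nu>/2))" by (simp only: powr_powr)
    also have "\<dots> = a powr (\<nu>/2-1) * b" using b unfolding e1 by simp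
    finally show ?thesis .
  qed
  ultimately have "a powr (\<nu>/2-1) * b \<le> 1" by simp
  then have "m powr (\<nu>/2-1) / \<nu> powr (\<nu>/2-1) * ((\<nu>-m)/2) \<le> 1"
    unfolding a_def b_def using assms by (simp add: powr_divide)
  then have "m powr (\<nu>/2-1) * (\<nu>-m) \<le> 2 * \<nu> powr (\<nu>/2-1)"
    using assms by (simp add: field_simps)
  then have "m powr (\<nu>/2-1) * (\<nu>-m) * \<nu> \<le> 2 * \<nu> powr (\<nu>/2-1) * \<nu>"
    using assms by (intro mult_right_mono) auto
  also have "2 * \<nu> powr (\<nu>/2-1) * \<nu> = 2 * \<nu> powr (\<nu>/2)"
    using assms by (simp add: powr_diff)
  finally show ?thesis by (simp add: mult_ac)
qed

lemma core_ineq: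
  fixes \<nu> m x s :: real assumes "\<nu> > 2" "0 < m" "m < \<nu>" "x > 0"
  and s_def: "s = x\<^sup>2 + \<nu> - m"
  shows "(\<nu>-m) * m powr (\<nu>/2-1) * x * (\<nu> * s + m) \<le> 2 * \<nu> powr (\<nu>/2) * (s * sqrt s)"
proof -
  define a where "a = \<nu> - m"
  define M where "M = max (\<nu>*a) (2*m)"
  have a: "a > 0" using assms by (simp add: a_def)
  have s: "s > a" using assms by (simp add: s_def a_def)
  have x2: "x\<^sup>2 = s - a" by (simp add: s_def a_def)
  have c1: "x * (s + a/2) \<le> s * sqrt s"
  proof -
    have "(x * (s + a/2))\<^sup>2 = (s - a) * (s + a/2)\<^sup>2" by (simp add: power_mult_distrib x2)
    also have "\<dots> = s ^ 3 - 3 * a\<^sup>2 * s / 4 - a ^ 3 / 4" by (simp add: field_simps power2_eq_square power3_eq_cube)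
    also have "\<dots> \<le> s ^ 3"
    proof -
      have "0 < s" using a s by linarith
      then have "0 < 3 * a\<^sup>2 * s / 4" "0 < a ^ 3 / 4" using a by simp_all
      then show ?thesis by linarith
    qed
    also have "\<dots> = (s * sqrt s)\<^sup>2" using s a by (simp add: power_mult_distrib power3_eq_cube power2_eq_square)
    finally have "(x * (s + a/2))\<^sup>2 \<le> (s * sqrt s)\<^sup>2" .
    moreover have "0 \<le> s * sqrt s" using s a by simp
    ultimately show ?thesis by (rule power2_le_imp_le)
  qed
  have c2: "a * (\<nu> * s + m) \<le> M * (s + a/2)"
  proof -
    have "\<nu>*a* s \<le> M* s" using s a by (intro mult_right_mono) (auto simp: M_def)
    moreover have "m*a \<le> (M/2)*a" using a by (intro mult_right_mono) (auto simp: M_def)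
    ultimately show ?thesis by (simp add: algebra_simps)
  qed
  have c3: "m powr (\<nu>/2-1) * M \<le> 2 * \<nu> powr (\<nu>/2)"
  proof (cases "\<nu>*a \<le> 2*m")
    case True
    then have "M = 2*m" by (simp add: M_def)
    moreover have "m powr (\<nu>/2-1) * m = m powr (\<nu>/2)" using assms by (simp add: powr_diff)
    moreover have "m powr (\<nu>/2) \<le> \<nu> powr (\<nu>/2)" using assms by (intro powr_mono2) auto
    ultimately show ?thesis by simp
  next
    case False
    then have "M = \<nu>*a" by (simp add: M_def)
    then show ?thesis using young_part[OF assms(1-3)] by (simp add: a_def)
  qed
  have Mnn: "M \<ge> 0" using assms by (simp add: M_def)
  have "(\<nu>-m) * m powr (\<nu>/2-1) * x * (\<nu> * s + m) = m powr (\<nu>/2-1) * (x * (a * (\<nu> * s + m)))"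
    by (simp add: a_def mult_ac)
  also have "\<dots> \<le> m powr (\<nu>/2-1) * (x * (M * (s + a/2)))"
    using c2 assms by (intro mult_left_mono) auto
  also have "\<dots> = (m powr (\<nu>/2-1) * M) * (x * (s + a/2))" by (simp add: mult_ac)
  also have "\<dots> \<le> (2 * \<nu> powr (\<nu>/2)) * (s * sqrt s)"
  proof (rule mult_mono[OF c3 c1])
    show "0 \<le> 2 * \<nu> powr (\<nu>/2)" by simp
    have "0 < s" using a s by linarith
    then show "0 \<le> x * (s + a/2)" using assms(4) a by simp
  qed
  finally show ?thesis .
qed



lemma g_alg:
  fixes K P r u e x :: real
  assumes "P > 0" "r > 0" "u > 0"
  shows "- ((0 * (P * r) - K * (e * (P / u) * (2*x) * r + inverse r / 2 * (2*x) * P)) / ((P * r) * (P * r)))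
       = K * x * (2*e*(r*r) + u) / ((P * u) * ((r*r) * r))"
  using assms by (simp add: field_simps power2_eq_square)

lemma g_deriv:
  fixes \<nu> m K x :: real
  assumes "\<nu> > 2" "0 < m" "m < \<nu>"
  shows "((\<lambda>x. - (K / ((x\<^sup>2+\<nu>) powr ((\<nu>-1)/2) * sqrt (x\<^sup>2+\<nu>-m)))) has_real_derivative
     K * x * (\<nu>*(x\<^sup>2+\<nu>) - (\<nu>-1)*m) / ((x\<^sup>2+\<nu>) powr ((\<nu>+1)/2) * ((x\<^sup>2+\<nu>-m) * sqrt (x\<^sup>2+\<nu>-m)))) (at x)"
proof -
  define u where "u = x\<^sup>2+\<nu>"
  define s where "s = x\<^sup>2+\<nu>-m"
  define e where "e = (\<nu>-1)/2"
  have x2: "x\<^sup>2 \<ge> 0" by simp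
  have u: "u > 0" and s: "s > 0" using assms x2 unfolding u_def s_def by linarith+
  have ss: "sqrt s * sqrt s = s" using s by simp
  have du: "((\<lambda>x. x\<^sup>2+\<nu>) has_real_derivative 2*x) (at x)"
    by (auto intro!: derivative_eq_intros)
  have ds: "((\<lambda>x. x\<^sup>2+\<nu>-m) has_real_derivative 2*x) (at x)"
    by (auto intro!: derivative_eq_intros)
  have dp: "((\<lambda>x. (x\<^sup>2+\<nu>) powr e) has_real_derivative e * u powr (e - 1) * (2*x)) (at x)"
    using DERIV_fun_powr[OF du, of e] u unfolding u_def by simp
  have dq: "((\<lambda>x. sqrt (x\<^sup>2+\<nu>-m)) has_real_derivative inverse (sqrt s) / 2 * (2*x)) (at x)"
    using DERIV_chain2[OF DERIV_real_sqrt ds] s unfolding s_def by simp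
  have dD: "((\<lambda>x. (x\<^sup>2+\<nu>) powr e * sqrt (x\<^sup>2+\<nu>-m)) has_real_derivative
      (e * u powr (e-1) * (2*x) * sqrt s + inverse (sqrt s) / 2 * (2*x) * u powr e)) (at x)"
    using DERIV_mult[OF dp dq] unfolding u_def s_def by simp
  have eqD: "(x\<^sup>2+\<nu>) powr e * sqrt (x\<^sup>2+\<nu>-m) = u powr e * sqrt s" by (simp add: u_def s_def)
  have D0: "(x\<^sup>2+\<nu>) powr e * sqrt (x\<^sup>2+\<nu>-m) \<noteq> 0" unfolding eqD using u s by simp
  have p1: "u powr (e-1) = u powr e / u" using u by (simp add: powr_diff)
  have ee: "(\<nu>+1)/2 = e + 1" by (simp add: e_def field_simps)
  have p2: "u powr ((\<nu>+1)/2) = u powr e * u" unfolding ee using u by (simp add: powr_add)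
  have pe: "u powr e > 0" using u by simp
  have sq: "sqrt s > 0" using s by simp
  have lin: "\<nu>*u - (\<nu>-1)*m = 2*e*(sqrt s * sqrt s) + u" unfolding ss by (simp add: e_def u_def s_def field_simps)
  have "((\<lambda>x. - (K / ((x\<^sup>2+\<nu>) powr e * sqrt (x\<^sup>2+\<nu>-m)))) has_real_derivative
      - ((0 * (u powr e * sqrt s) - K * (e * u powr (e-1) * (2*x) * sqrt s + inverse (sqrt s) / 2 * (2*x) * u powr e))
        / ((u powr e * sqrt s) * (u powr e * sqrt s)))) (at x)"
    using DERIV_minus[OF DERIV_divide[OF DERIV_const[of K] dD D0]] unfolding eqD .
  also have "- ((0 * (u powr e * sqrt s) - K * (e * u powr (e-1) * (2*x) * sqrt s + inverse (sqrt s) / 2 * (2*x) * u powr e))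
        / ((u powr e * sqrt s) * (u powr e * sqrt s)))
      = K * x * (\<nu>*u - (\<nu>-1)*m) / (u powr ((\<nu>+1)/2) * (s * sqrt s))"
    unfolding p1 p2 lin using g_alg[OF pe sq u, of K e x] s by (simp add: ss)
  finally show ?thesis unfolding u_def s_def e_def .
qed

lemma student_t_density_total:
  assumes nu: "\<nu> > 2"
  shows "set_integrable lborel UNIV (student_t_density \<nu>)" and "(LBINT x:UNIV. student_t_density \<nu> x) = 1"
proof -
  define C where "C = Gamma ((\<nu> + 1) / 2) / (sqrt (\<nu> * pi) * Gamma (\<nu> / 2))"
  have td: "student_t_density \<nu> = (\<lambda>x. C * rho \<nu> x)" by (auto simp: student_t_density_def rho_def C_def)
  have i: "set_integrable lborel UNIV (rho \<nu>)" using rho_total(1)[OF nu] by simp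
  then show "set_integrable lborel UNIV (student_t_density \<nu>)" unfolding td by simp
  have v: "(LBINT x:UNIV. rho \<nu> x) = sqrt \<nu> * 2 powr (\<nu> - 1) * Beta (\<nu>/2) (\<nu>/2)"
    using rho_total(2)[OF nu] by (simp add: interval_lebesgue_integral_def)
  have g1: "Gamma (\<nu>/2) > 0" "Gamma ((\<nu>+1)/2) > 0" "Gamma \<nu> > 0" using nu by (auto intro!: Gamma_real_pos)
  have dup: "Gamma (\<nu>/2) * Gamma ((\<nu>+1)/2) = 2 powr (1 - \<nu>) * sqrt pi * Gamma \<nu>"
    using Gamma_dup_real[of "\<nu>/2"] nu by (simp add: add_divide_distrib)
  have p: "2 powr (\<nu> - 1) * 2 powr (1 - \<nu>) = (1::real)" by (simp flip: powr_add)
  have "(LBINT x:UNIV. student_t_density \<nu> x) = C * (sqrt \<nu> * 2 powr (\<nu> - 1) * Beta (\<nu>/2) (\<nu>/2))"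
    unfolding td using v by simp
  also have "\<dots> = 1"
  proof -
    have "Beta (\<nu>/2) (\<nu>/2) = Gamma (\<nu>/2) * Gamma (\<nu>/2) / Gamma \<nu>" by (simp add: Beta_def)
    also have "Gamma \<nu> = Gamma (\<nu>/2) * Gamma ((\<nu>+1)/2) / (2 powr (1 - \<nu>) * sqrt pi)"
      using dup by (simp add: field_simps)
    finally have B: "Beta (\<nu>/2) (\<nu>/2) = Gamma (\<nu>/2) * 2 powr (1 - \<nu>) * sqrt pi / Gamma ((\<nu>+1)/2)"
      using g1 by (simp add: field_simps)
    have g2: "Gamma (\<nu>/2) \<noteq> 0" "Gamma ((1+\<nu>)/2) \<noteq> 0" using g1 by (auto simp: add.commute)
    show ?thesis unfolding B C_def using g1 g2 nu p
      by (simp add: real_sqrt_mult field_simps)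
  qed
  finally show "(LBINT x:UNIV. student_t_density \<nu> x) = 1" .
qed

lemma KC_alg: fixes G1 G2 sv sp A :: real assumes "sv > 0" "sp > 0" "G2 > 0"
  shows "G1 * A / (2 * sp * G2) = G1 / (sv * sp * G2) * (A * sv / 2)" using assms by (simp add: field_simps)

lemma inv_sqrt_lim:
  fixes c :: real shows "((\<lambda>x. 1 / sqrt (x\<^sup>2 + c)) \<longlongrightarrow> 0) at_top"
  by real_asymp

theorem lemma1:
  fixes \<nu> m t :: real
  assumes "\<nu> > 2" and "0 < m" and "m < \<nu>" and "t > 0"
  shows "1 / ((1 - student_t_CDF \<nu> t) * (t\<^sup>2 + \<nu>) powr ((\<nu> - 1) / 2))
           \<le> sqrt (t\<^sup>2 + \<nu> - m) /
             (Gamma ((\<nu> + 1) / 2) * (\<nu> - m) * m powr (\<nu> / 2 - 1)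
              / (2 * sqrt pi * Gamma (\<nu> / 2)))"
proof -
  note nu = assms(1) and m = assms(2,3) and t = assms(4)
  define C where "C = Gamma ((\<nu>+1)/2) / (sqrt (\<nu>*pi) * Gamma (\<nu>/2))"
  define K where "K = Gamma ((\<nu> + 1) / 2) * (\<nu> - m) * m powr (\<nu> / 2 - 1) / (2 * sqrt pi * Gamma (\<nu> / 2))"
  define g where "g x = K / ((x\<^sup>2+\<nu>) powr ((\<nu>-1)/2) * sqrt (x\<^sup>2+\<nu>-m))" for x
  define G' where "G' x = K * x * (\<nu>*(x\<^sup>2+\<nu>) - (\<nu>-1)*m) / ((x\<^sup>2+\<nu>) powr ((\<nu>+1)/2) * ((x\<^sup>2+\<nu>-m) * sqrt (x\<^sup>2+\<nu>-m)))" for x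
  define d where "d = student_t_density \<nu>"
  have gam: "Gamma (\<nu>/2) > 0" "Gamma ((\<nu>+1)/2) > 0" using nu by (auto intro!: Gamma_real_pos)
  have K: "K > 0" unfolding K_def using gam m by (auto intro!: divide_pos_pos mult_pos_pos)
  have C: "C > 0" unfolding C_def using gam nu by (auto intro!: divide_pos_pos mult_pos_pos)
  have KC: "K = C * ((\<nu>-m) * m powr (\<nu>/2-1) * sqrt \<nu> / 2)"
  proof -
    have sn: "sqrt \<nu> > 0" "sqrt pi > 0" using nu by auto
    have "K = Gamma ((\<nu>+1)/2) * ((\<nu>-m) * m powr (\<nu>/2-1)) / (2 * sqrt pi * Gamma (\<nu>/2))"
      unfolding K_def by (simp add: mult.assoc)
    also have "\<dots> = Gamma ((\<nu>+1)/2) / (sqrt \<nu> * sqrt pi * Gamma (\<nu>/2)) * ((\<nu>-m) * m powr (\<nu>/2-1) * sqrt \<nu> / 2)"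
      by (rule KC_alg[OF sn gam(1)])
    finally show ?thesis unfolding C_def real_sqrt_mult .
  qed
  have us: "x\<^sup>2 + \<nu> > 0" "x\<^sup>2 + \<nu> - m > 0" for x :: real
  proof -
    have "x\<^sup>2 \<ge> 0" by simp
    then show "x\<^sup>2 + \<nu> > 0" "x\<^sup>2 + \<nu> - m > 0" using nu m by linarith+
  qed
  have intU: "set_integrable lborel UNIV d" and totU: "(LBINT x:UNIV. d x) = 1"
    using student_t_density_total[OF nu] unfolding d_def by auto
  have int1: "set_integrable lborel {..t} d" by (rule set_integrable_subset[OF intU]) auto
  have int2: "set_integrable lborel {t<..} d" by (rule set_integrable_subset[OF intU]) auto
  have "(LBINT x:UNIV. d x) = (LBINT x:({..t} \<union> {t<..}). d x)"
  proof -
    have "{..t} \<union> {t<..} = (UNIV :: real set)" by auto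
    then show ?thesis by simp
  qed
  also have "\<dots> = (LBINT x:{..t}. d x) + (LBINT x:{t<..}. d x)"
    by (rule set_integral_Un[OF _ int1 int2]) auto
  finally have T: "1 - student_t_CDF \<nu> t = (LBINT x:{t<..}. d x)"
    using totU unfolding student_t_CDF_def d_def by simp
  have der: "\<And>x. ereal t < ereal x \<Longrightarrow> ereal x < \<infinity> \<Longrightarrow> DERIV (\<lambda>x. - g x) x :> G' x"
    unfolding g_def G'_def using g_deriv[OF nu m] by simp
  have G'pos: "G' x \<ge> 0" if "x > 0" for x
  proof -
    have "\<nu>*(x\<^sup>2+\<nu>) - (\<nu>-1)*m = \<nu> * (x\<^sup>2+\<nu>-m) + m" by (simp add: algebra_simps)
    also have "\<dots> > 0" using us[of x] nu m by (intro add_pos_pos mult_pos_pos) auto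
    finally show ?thesis unfolding G'_def using K that us[of x]
      by (intro divide_nonneg_pos mult_nonneg_nonneg mult_pos_pos) auto
  qed
  have contG': "isCont G' x" for x
    unfolding G'_def[abs_def] using us[of x]
    by (intro continuous_intros) auto
  have contg: "isCont g x" for x
    unfolding g_def[abs_def] using us[of x]
    by (intro continuous_intros) auto
  have A: "(((\<lambda>x. - g x) \<circ> real_of_ereal) \<longlongrightarrow> - g t) (at_right (ereal t))"
    unfolding ereal_tendsto_simps
    by (rule tendsto_mono[OF at_within_le_at]) (use contg[of t] in \<open>auto intro: tendsto_minus simp: isCont_def\<close>)
  have glim: "(g \<longlongrightarrow> 0) at_top"
  proof (rule tendsto_sandwich[of "\<lambda>x. 0" g at_top "\<lambda>x. K * (1 / sqrt (x\<^sup>2 + (\<nu> - m)))"])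
    show "\<forall>\<^sub>F x in at_top. 0 \<le> g x"
    proof (intro always_eventually allI)
      fix x :: real
      have "0 < (x\<^sup>2+\<nu>) powr ((\<nu>-1)/2) * sqrt (x\<^sup>2+\<nu>-m)" using us[of x] by (intro mult_pos_pos) auto
      then show "0 \<le> g x" unfolding g_def using K by simp
    qed
    show "\<forall>\<^sub>F x in at_top. g x \<le> K * (1 / sqrt (x\<^sup>2 + (\<nu> - m)))"
    proof (intro always_eventually allI)
      fix x :: real
      have p: "(x\<^sup>2+\<nu>) powr ((\<nu>-1)/2) \<ge> 1" using nu us[of x]
        by (intro ge_one_powr_ge_zero) (auto simp: add_increasing)
      have r: "sqrt (x\<^sup>2+\<nu>-m) > 0" using us[of x] by simp
      have le: "1 * sqrt (x\<^sup>2+\<nu>-m) \<le> (x\<^sup>2+\<nu>) powr ((\<nu>-1)/2) * sqrt (x\<^sup>2+\<nu>-m)"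
        using p r by (intro mult_right_mono) auto
      have pos: "0 < ((x\<^sup>2+\<nu>) powr ((\<nu>-1)/2) * sqrt (x\<^sup>2+\<nu>-m)) * (1 * sqrt (x\<^sup>2+\<nu>-m))"
        using p r by (intro mult_pos_pos) auto
      have "g x \<le> K / (1 * sqrt (x\<^sup>2+\<nu>-m))" unfolding g_def
        by (rule divide_left_mono[OF le _ pos]) (use K in simp)
      then show "g x \<le> K * (1 / sqrt (x\<^sup>2 + (\<nu> - m)))" by (simp add: algebra_simps)
    qed
    show "((\<lambda>x. 0) \<longlongrightarrow> (0::real)) at_top" by simp
    show "((\<lambda>x. K * (1 / sqrt (x\<^sup>2 + (\<nu> - m)))) \<longlongrightarrow> 0) at_top"
      using tendsto_mult_right_zero[OF inv_sqrt_lim[of "\<nu> - m"], of K] by simp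
  qed
  have B: "(((\<lambda>x. - g x) \<circ> real_of_ereal) \<longlongrightarrow> 0) (at_left \<infinity>)"
    unfolding ereal_tendsto_simps using tendsto_minus[OF glim] by simp
  have nonneg: "AE x in lborel. ereal t < ereal x \<longrightarrow> ereal x < \<infinity> \<longrightarrow> 0 \<le> G' x"
    using t by (intro AE_I2) (auto intro!: G'pos)
  note FTC = interval_integral_FTC_nonneg[of "ereal t" \<infinity> "\<lambda>x. - g x" G' "- g t" 0, OF _ der _ nonneg A B]
  have intG: "set_integrable lborel {t<..} G'" using FTC(1) contG' by simp
  have valG: "(LBINT x:{t<..}. G' x) = g t"
    using FTC(2) contG' by (simp add: interval_integral_to_infinity_eq)
  have pw: "G' x \<le> d x" if "x > 0" for x
  proof -
    define u where "u = x\<^sup>2 + \<nu>"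
    define s where "s = x\<^sup>2 + \<nu> - m"
    define U where "U = u powr ((\<nu>+1)/2)"
    have u: "u > 0" and s: "s > 0" using us[of x] by (auto simp: u_def s_def)
    have U: "U > 0" using u by (simp add: U_def)
    have r: "sqrt s > 0" using s by simp
    have sr: "s * sqrt s > 0" using s r by simp
    have core: "(\<nu>-m) * m powr (\<nu>/2-1) * x * (\<nu> * s + m) \<le> 2 * \<nu> powr (\<nu>/2) * (s * sqrt s)"
      by (rule core_ineq[OF nu m that]) (simp add: s_def)
    have lin: "\<nu>*(x\<^sup>2+\<nu>) - (\<nu>-1)*m = \<nu> * s + m" by (simp add: s_def algebra_simps)
    have "G' x = (C * sqrt \<nu> / (2*U)) * (((\<nu>-m) * m powr (\<nu>/2-1) * x * (\<nu> * s + m)) / (s * sqrt s))"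
      unfolding G'_def lin U_def[symmetric, unfolded u_def] s_def[symmetric] KC
      using U sr by (simp add: field_simps U_def u_def)
    also have "\<dots> \<le> (C * sqrt \<nu> / (2*U)) * (2 * \<nu> powr (\<nu>/2))"
      using core sr C U nu by (intro mult_left_mono) (auto simp: pos_divide_le_eq)
    also have "\<dots> = C * (\<nu> powr (\<nu>/2) * sqrt \<nu>) / U" using U by (simp add: field_simps)
    also have "\<dots> = d x"
    proof -
      have "1 + x\<^sup>2/\<nu> = u / \<nu>" using nu by (simp add: u_def field_simps)
      then have "(1 + x\<^sup>2/\<nu>) powr (- (\<nu> + 1) / 2) = \<nu> powr ((\<nu>+1)/2) / U"
        using u nu by (simp add: U_def powr_divide powr_minus_divide divide_simps flip: powr_add)
      moreover have "\<nu> powr ((\<nu>+1)/2) = \<nu> powr (\<nu>/2) * sqrt \<nu>"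
        using nu by (simp add: add_divide_distrib powr_add powr_half_sqrt)
      ultimately show ?thesis unfolding d_def student_t_density_def C_def[symmetric] by simp
    qed
    finally show ?thesis .
  qed
  have "g t \<le> 1 - student_t_CDF \<nu> t"
    unfolding T valG[symmetric]
    by (rule set_integral_mono[OF intG int2]) (use pw t in auto)
  define P where "P = (t\<^sup>2 + \<nu>) powr ((\<nu> - 1) / 2)"
  define r where "r = sqrt (t\<^sup>2 + \<nu> - m)"
  have P: "P > 0" unfolding P_def using us[of t] by simp
  have r: "r > 0" unfolding r_def using us[of t] by simp
  have gt: "g t = K / (P * r)" unfolding g_def P_def r_def ..
  have low: "K / (P * r) \<le> 1 - student_t_CDF \<nu> t" using \<open>g t \<le> _\<close> gt by simp
  have lowpos: "K / (P * r) > 0" using K P r by simp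
  have "1 / ((1 - student_t_CDF \<nu> t) * P) \<le> 1 / ((K / (P * r)) * P)"
    using low lowpos P by (intro divide_left_mono mult_right_mono mult_pos_pos) auto
  also have "\<dots> = r / K" using P r K by (simp add: field_simps)
  finally show ?thesis unfolding P_def r_def K_def .
qed

end
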